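(* For all finite multisets $\Gamma,\Delta$ of formulas: $\mathsf{G}(\mathbf{KT}_D)\vdash\Gamma\Rightarrow\Delta$ if and only if $\mathsf{G}(\mathbf{KT}^+_D)\vdash\emptyset\mid\Gamma\Rightarrow\Delta$.
   Context: Language: fix a finite nonempty set $\mathsf{Agt}$ of agents and a countable set $\mathsf{Prop}$ of propositional variables; $\mathsf{Grp}$ is the set of nonempty subsets of $\mathsf{Agt}$. Formulas: $\alpha::=p\mid\bot\mid\alpha\wedge\alpha\mid\alpha\vee\alpha\mid\alpha\rightarrow\alpha\mid\neg\alpha\mid D_G\alpha$ ($p\in\mathsf{Prop}$, $G\in\mathsf{Grp}$). Outmost-boxed formula: one of the form $D_G\gamma$. Derivable = root of a finite tree built from initial sequents by the rules of the calculus. Calculus $\mathsf{G}(\mathbf{KT}_D)$ on sequents $\Gamma\Rightarrow\Delta$ (pairs of finite multisets): initial sequents $\Gamma,p\Rightarrow p,\Delta$ and $\bot,\Gamma\Rightarrow\Delta$; rules $(R\wedge)$ from $\Gamma\Rightarrow\Delta,\alpha_1$ and $\Gamma\Rightarrow\Delta,\alpha_2$ infer $\Gamma\Rightarrow\Delta,\alpha_1\wedge\alpha_2$; $(L\wedge)$ from $\alpha_1,\alpha_2,\Gamma\Rightarrow\Delta$ infer $\alpha_1\wedge\alpha_2,\Gamma\Rightarrow\Delta$; $(R\vee)$ from $\Gamma\Rightarrow\Delta,\alpha_1,\alpha_2$ infer $\Gamma\Rightarrow\Delta,\alpha_1\vee\alpha_2$; $(L\vee)$ from $\alpha_1,\Gamma\Rightarrow\Delta$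 and $\alpha_2,\Gamma\Rightarrow\Delta$ infer $\alpha_1\vee\alpha_2,\Gamma\Rightarrow\Delta$; $(R\rightarrow)$ from $\alpha_1,\Gamma\Rightarrow\Delta,\alpha_2$ infer $\Gamma\Rightarrow\Delta,\alpha_1\rightarrow\alpha_2$; $(L\rightarrow)$ from $\Gamma\Rightarrow\Delta,\alpha_1$ and $\alpha_2,\Gamma\Rightarrow\Delta$ infer $\alpha_1\rightarrow\alpha_2,\Gamma\Rightarrow\Delta$; $(R\neg)$ from $\alpha,\Gamma\Rightarrow\Delta$ infer $\Gamma\Rightarrow\Delta,\neg\alpha$; $(L\neg)$ from $\Gamma\Rightarrow\Delta,\alpha$ infer $\neg\alpha,\Gamma\Rightarrow\Delta$; $(D_K)$: from $\alpha_1,\dots,\alpha_n\Rightarrow\beta$ ($n\ge0$) infer $\Sigma,D_{G_1}\alpha_1,\dots,D_{G_n}\alpha_n\Rightarrow D_G\beta,\Omega$ where all $G_i\subseteq G$, $\Sigma$ consists only of propositional variables, $\bot$, and $D_H\gamma$ with $H\not\subseteq G$, and $\Omega$ only of propositional variables, $\bot$, outmost-boxed formulas; $(D_T)$: from $D_G\alpha,\alpha,\Gamma\Rightarrow\Delta$ infer $D_G\alpha,\Gamma\Rightarrow\Delta$. Calculus $\mathsf{G}(\mathbf{KT}^+_D)$ on T-sequents $\Sigma\mid\Gamma\Rightarrow\Delta$ ($\Gamma,\Delta$ finite multisets of formulas, $\Sigma$ a finite multiset of outmost-boxed formulas): initial sequents $\Sigma\mid\Gamma,p\Rightarrow p,\Delta$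 and $\Sigma\mid\bot,\Gamma\Rightarrow\Delta$; the same eight propositional rules acting on $\Gamma,\Delta$ with $\Sigma$ unchanged; $(D_K^+)$: from $\emptyset\mid\alpha_1,\dots,\alpha_n\Rightarrow\beta$ ($n\ge0$) infer $\Sigma,D_{G_1}\alpha_1,\dots,D_{G_n}\alpha_n\mid\Pi\Rightarrow D_G\beta,\Omega$, provided $G_i\subseteq G$, $\Sigma$ consists only of formulas $D_H\gamma$ with $H\not\subseteq G$, $\Pi$ only of propositional variables and $\bot$, $\Omega$ only of propositional variables, $\bot$, outmost-boxed formulas; $(D_T^+)$: from $D_G\alpha,\Sigma\mid\Gamma,\alpha\Rightarrow\Delta$ infer $\Sigma\mid\Gamma,D_G\alpha\Rightarrow\Delta$. *)

theory Defs
  imports Main "HOL-Library.Multiset" "HOL-Library.Countable"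
begin

text \<open>Groups: nonempty sets of agents. Agents form a finite (nonempty) type 'a.\<close>
typedef 'a grp = "{G :: 'a set. G \<noteq> {}}"
  morphisms gset Abs_grp
  by auto

datatype ('a, 'p) fm =
    Atom 'p
  | Bot
  | Conj "('a,'p) fm" "('a,'p) fm"
  | Disj "('a,'p) fm" "('a,'p) fm"
  | Imp "('a,'p) fm" "('a,'p) fm"
  | Neg "('a,'p) fm"
  | Box "'a grp" "('a,'p) fm"

fun is_boxed :: "('a,'p) fm \<Rightarrow> bool" where
  "is_boxed (Box G a) = True"
| "is_boxed _ = False"

fun is_atom_or_bot :: "('a,'p) fm \<Rightarrow> bool" where
  "is_atom_or_bot (Atom p) = True"
| "is_atom_or_bot Bot = True"
| "is_atom_or_bot _ = False"

fun sigma_ok :: "'a grp \<Rightarrow> ('a,'p) fm \<Rightarrow> bool" where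
  "sigma_ok G (Atom p) = True"
| "sigma_ok G Bot = True"
| "sigma_ok G (Box H c) = (\<not> gset H \<subseteq> gset G)"
| "sigma_ok G _ = False"

fun boxed_other :: "'a grp \<Rightarrow> ('a,'p) fm \<Rightarrow> bool" where
  "boxed_other G (Box H c) = (\<not> gset H \<subseteq> gset G)"
| "boxed_other G _ = False"

definition omega_ok :: "('a,'p) fm \<Rightarrow> bool" where
  "omega_ok f \<longleftrightarrow> is_atom_or_bot f \<or> is_boxed f"

text \<open>The calculus G(KT_D). The boxed antecedent formulas D_{G_i} \<alpha>_i of (D_K)
  are given by a list of pairs (G_i, \<alpha>_i).\<close>
inductive gKT :: "('a,'p) fm multiset \<Rightarrow> ('a,'p) fm multiset \<Rightarrow> bool" where
  ax: "gKT (Gm + {#Atom p#}) ({#Atom p#} + Dm)"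
| axBot: "gKT ({#Bot#} + Gm) Dm"
| RConj: "gKT Gm (Dm + {#a1#}) \<Longrightarrow> gKT Gm (Dm + {#a2#}) \<Longrightarrow> gKT Gm (Dm + {#Conj a1 a2#})"
| LConj: "gKT ({#a1, a2#} + Gm) Dm \<Longrightarrow> gKT ({#Conj a1 a2#} + Gm) Dm"
| RDisj: "gKT Gm (Dm + {#a1, a2#}) \<Longrightarrow> gKT Gm (Dm + {#Disj a1 a2#})"
| LDisj: "gKT ({#a1#} + Gm) Dm \<Longrightarrow> gKT ({#a2#} + Gm) Dm \<Longrightarrow> gKT ({#Disj a1 a2#} + Gm) Dm"
| RImp: "gKT ({#a1#} + Gm) (Dm + {#a2#}) \<Longrightarrow> gKT Gm (Dm + {#Imp a1 a2#})"
| LImp: "gKT Gm (Dm + {#a1#}) \<Longrightarrow> gKT ({#a2#} + Gm) Dm \<Longrightarrow> gKT ({#Imp a1 a2#} + Gm) Dm"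
| RNeg: "gKT ({#a#} + Gm) Dm \<Longrightarrow> gKT Gm (Dm + {#Neg a#})"
| LNeg: "gKT Gm (Dm + {#a#}) \<Longrightarrow> gKT ({#Neg a#} + Gm) Dm"
| DK: "gKT (mset (map snd xs)) {#b#} \<Longrightarrow>
       (\<forall>(H, a) \<in> set xs. gset H \<subseteq> gset G) \<Longrightarrow>
       (\<forall>f \<in># Sm. sigma_ok G f) \<Longrightarrow>
       (\<forall>f \<in># Om. omega_ok f) \<Longrightarrow>
       gKT (Sm + mset (map (\<lambda>(H, a). Box H a) xs)) ({#Box G b#} + Om)"
| DT: "gKT ({#Box G a, a#} + Gm) Dm \<Longrightarrow> gKT ({#Box G a#} + Gm) Dm"

text \<open>The calculus G(KT^+_D) on T-sequents \<Sigma> | \<Gamma> \<Rightarrow> \<Delta>, where \<Sigma> consists of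
  outmost-boxed formulas.\<close>
inductive gKTp :: "('a,'p) fm multiset \<Rightarrow> ('a,'p) fm multiset \<Rightarrow> ('a,'p) fm multiset \<Rightarrow> bool" where
  ax: "\<forall>f \<in># Sm. is_boxed f \<Longrightarrow> gKTp Sm (Gm + {#Atom p#}) ({#Atom p#} + Dm)"
| axBot: "\<forall>f \<in># Sm. is_boxed f \<Longrightarrow> gKTp Sm ({#Bot#} + Gm) Dm"
| RConj: "gKTp Sm Gm (Dm + {#a1#}) \<Longrightarrow> gKTp Sm Gm (Dm + {#a2#}) \<Longrightarrow> gKTp Sm Gm (Dm + {#Conj a1 a2#})"
| LConj: "gKTp Sm ({#a1, a2#} + Gm) Dm \<Longrightarrow> gKTp Sm ({#Conj a1 a2#} + Gm) Dm"
| RDisj: "gKTp Sm Gm (Dm + {#a1, a2#}) \<Longrightarrow> gKTp Sm Gm (Dm + {#Disj a1 a2#})"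
| LDisj: "gKTp Sm ({#a1#} + Gm) Dm \<Longrightarrow> gKTp Sm ({#a2#} + Gm) Dm \<Longrightarrow> gKTp Sm ({#Disj a1 a2#} + Gm) Dm"
| RImp: "gKTp Sm ({#a1#} + Gm) (Dm + {#a2#}) \<Longrightarrow> gKTp Sm Gm (Dm + {#Imp a1 a2#})"
| LImp: "gKTp Sm Gm (Dm + {#a1#}) \<Longrightarrow> gKTp Sm ({#a2#} + Gm) Dm \<Longrightarrow> gKTp Sm ({#Imp a1 a2#} + Gm) Dm"
| RNeg: "gKTp Sm ({#a#} + Gm) Dm \<Longrightarrow> gKTp Sm Gm (Dm + {#Neg a#})"
| LNeg: "gKTp Sm Gm (Dm + {#a#}) \<Longrightarrow> gKTp Sm ({#Neg a#} + Gm) Dm"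
| DKp: "gKTp {#} (mset (map snd xs)) {#b#} \<Longrightarrow>
       (\<forall>(H, a) \<in> set xs. gset H \<subseteq> gset G) \<Longrightarrow>
       (\<forall>f \<in># Sm. boxed_other G f) \<Longrightarrow>
       (\<forall>f \<in># Pm. is_atom_or_bot f) \<Longrightarrow>
       (\<forall>f \<in># Om. omega_ok f) \<Longrightarrow>
       gKTp (Sm + mset (map (\<lambda>(H, a). Box H a) xs)) Pm ({#Box G b#} + Om)"
| DTp: "gKTp ({#Box G a#} + Sm) ({#a#} + Gm) Dm \<Longrightarrow> gKTp Sm ({#Box G a#} + Gm) Dm"

end

theory Submission
  imports Defs
begin

lemma diff_single_add: "y \<in># M \<Longrightarrow> add_mset x M - {#y#} = add_mset x (M - {#y#})"
  by (metis add_mset_remove_trivial diff_union_swap insert_DiffM)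

lemma diff_single_plus: "y \<in># N \<Longrightarrow> M + N - {#y#} = M + (N - {#y#})"
  by (metis insert_DiffM union_mset_add_mset_right add_mset_remove_trivial)

primrec lprem :: "('a,'p) fm \<Rightarrow> (('a,'p) fm multiset \<times> ('a,'p) fm multiset) list" where
  "lprem (Conj a b) = [({#a,b#},{#})]"
| "lprem (Disj a b) = [({#a#},{#}),({#b#},{#})]"
| "lprem (Imp a b) = [({#},{#a#}),({#b#},{#})]"
| "lprem (Neg a) = [({#},{#a#})]"
| "lprem (Atom p) = []"
| "lprem Bot = []"
| "lprem (Box H a) = []"

primrec rprem :: "('a,'p) fm \<Rightarrow> (('a,'p) fm multiset \<times> ('a,'p) fm multiset) list" where
  "rprem (Conj a b) = [({#},{#a#}),({#},{#b#})]"
| "rprem (Disj a b) = [({#},{#a,b#})]"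
| "rprem (Imp a b) = [({#a#},{#b#})]"
| "rprem (Neg a) = [({#a#},{#})]"
| "rprem (Atom p) = []"
| "rprem Bot = []"
| "rprem (Box H a) = []"

lemma lprem_size: "(L,R) \<in> set (lprem c) \<Longrightarrow> f \<in># L + R \<Longrightarrow> size f < size c"
  by (cases c) auto
lemma rprem_size: "(L,R) \<in> set (rprem c) \<Longrightarrow> f \<in># L + R \<Longrightarrow> size f < size c"
  by (cases c) auto
lemma lprem_atom: "is_atom_or_bot c \<Longrightarrow> lprem c = []"
  by (cases c) auto
lemma rprem_omega: "omega_ok c \<Longrightarrow> rprem c = []"
  by (cases c) (auto simp: omega_ok_def)
lemma fm_cases3: "is_atom_or_bot c \<or> lprem c \<noteq> [] \<or> (\<exists>H d. c = Box H d)"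
  by (cases c) auto
lemma fm_cases_r: "omega_ok c \<or> rprem c \<noteq> []"
  by (cases c) (auto simp: omega_ok_def)

lemma Lrule:
  assumes "lprem P \<noteq> []" "\<And>L R. (L,R) \<in> set (lprem P) \<Longrightarrow> gKTp S (L + G) (R + D)"
  shows "gKTp S (add_mset P G) D"
proof (cases P)
  case (Conj a b) then show ?thesis using assms(2)[of "{#a,b#}" "{#}"] gKTp.LConj[of S a b G D] by simp
next
  case (Disj a b) then show ?thesis using assms(2)[of "{#a#}" "{#}"] assms(2)[of "{#b#}" "{#}"] gKTp.LDisj[of S a G D b] by simp
next
  case (Imp a b) then show ?thesis using assms(2)[of "{#}" "{#a#}"] assms(2)[of "{#b#}" "{#}"] gKTp.LImp[of S G D a b] by simp
next
  case (Neg a) then show ?thesis using assms(2)[of "{#}" "{#a#}"] gKTp.LNeg[of S G D a] by simp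
qed (use assms(1) in auto)

lemma Rrule:
  assumes "rprem P \<noteq> []" "\<And>L R. (L,R) \<in> set (rprem P) \<Longrightarrow> gKTp S (L + G) (R + D)"
  shows "gKTp S G (add_mset P D)"
proof (cases P)
  case (Conj a b) then show ?thesis using assms(2)[of "{#}" "{#a#}"] assms(2)[of "{#}" "{#b#}"] gKTp.RConj[of S G D a b] by simp
next
  case (Disj a b) then show ?thesis using assms(2)[of "{#}" "{#a,b#}"] gKTp.RDisj[of S G D a b] by simp
next
  case (Imp a b) then show ?thesis using assms(2)[of "{#a#}" "{#b#}"] gKTp.RImp[of S a G D b] by simp
next
  case (Neg a) then show ?thesis using assms(2)[of "{#a#}" "{#}"] gKTp.RNeg[of S a G D] by simp
qed (use assms(1) in auto)

lemma Lrule_m: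
  assumes "P \<in># G" "lprem P \<noteq> []" "\<And>L R. (L,R) \<in> set (lprem P) \<Longrightarrow> gKTp S (L + (G - {#P#})) (R + D)"
  shows "gKTp S G D"
proof -
  have "gKTp S (add_mset P (G - {#P#})) D" by (rule Lrule[OF assms(2,3)])
  then show ?thesis using assms(1) by (metis insert_DiffM)
qed

lemma Rrule_m:
  assumes "P \<in># D" "rprem P \<noteq> []" "\<And>L R. (L,R) \<in> set (rprem P) \<Longrightarrow> gKTp S (L + G) (R + (D - {#P#}))"
  shows "gKTp S G D"
proof -
  have "gKTp S G (add_mset P (D - {#P#}))" by (rule Rrule[OF assms(2,3)])
  then show ?thesis using assms(1) by (metis insert_DiffM)
qed

lemma ax_m: "\<forall>f\<in>#S. is_boxed f \<Longrightarrow> Atom p \<in># G \<Longrightarrow> Atom p \<in># D \<Longrightarrow> gKTp S G D"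
  using gKTp.ax[of S "G - {#Atom p#}" p "D - {#Atom p#}"]
  by (metis add_mset_add_single insert_DiffM union_commute)

lemma bot_m: "\<forall>f\<in>#S. is_boxed f \<Longrightarrow> Bot \<in># G \<Longrightarrow> gKTp S G D"
  using gKTp.axBot[of S "G - {#Bot#}" D] by (metis add_mset_add_single insert_DiffM union_commute)

lemma DT_a: "gKTp (add_mset (Box H a) S) (add_mset a G) D \<Longrightarrow> gKTp S (add_mset (Box H a) G) D"
  using gKTp.DTp[of H a S G D] by (metis add_mset_add_single union_commute)

lemma DT_m: "Box H a \<in># G \<Longrightarrow> gKTp (add_mset (Box H a) S) (add_mset a (G - {#Box H a#})) D \<Longrightarrow> gKTp S G D"
  using DT_a[of H a S "G - {#Box H a#}" D] by (metis insert_DiffM)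

abbreviation bx :: "'a grp \<times> ('a,'p) fm \<Rightarrow> ('a,'p) fm" where "bx \<equiv> (\<lambda>(H,a). Box H a)"

lemma DK_X:
  assumes "gKTp {#} (image_mset snd X) {#b#}" "\<forall>(H,a)\<in>#X. gset H \<subseteq> gset Gr"
    "\<forall>f\<in>#Sm. boxed_other Gr f" "\<forall>f\<in>#Pm. is_atom_or_bot f" "\<forall>f\<in>#Om. omega_ok f"
  shows "gKTp (Sm + image_mset bx X) Pm (add_mset (Box Gr b) Om)"
proof -
  obtain xs where X: "X = mset xs" using ex_mset by metis
  show ?thesis using gKTp.DKp[of xs b Gr Sm Pm Om] assms unfolding X by (simp add: mset_map)
qed

lemma DK_m:
  assumes "gKTp {#} (image_mset snd X) {#b#}" "\<forall>(H,a)\<in>#X. gset H \<subseteq> gset Gr"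
    "\<forall>f\<in>#Sm. boxed_other Gr f" "\<forall>f\<in>#Pm. is_atom_or_bot f" "\<forall>f\<in>#D. omega_ok f"
    "Box Gr b \<in># D" "S = Sm + image_mset bx X"
  shows "gKTp S Pm D"
proof -
  have "\<forall>f\<in>#D - {#Box Gr b#}. omega_ok f" using assms(5) by (auto dest: in_diffD)
  then have "gKTp (Sm + image_mset bx X) Pm (add_mset (Box Gr b) (D - {#Box Gr b#}))"
    using DK_X[of X b Gr Sm Pm "D - {#Box Gr b#}"] assms by blast
  then show ?thesis using assms(6,7) by (metis insert_DiffM)
qed

lemma gKTp_induct[consumes 1, case_names ax axBot L R DK DT]:
  assumes "gKTp S G D"
  and hax: "\<And>S G p D. \<forall>f\<in>#S. is_boxed f \<Longrightarrow> Q S (add_mset (Atom p) G) (add_mset (Atom p) D)"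
  and hbot: "\<And>S G D. \<forall>f\<in>#S. is_boxed f \<Longrightarrow> Q S (add_mset Bot G) D"
  and hL: "\<And>S P G D. lprem P \<noteq> [] \<Longrightarrow> (\<And>L R. (L,R) \<in> set (lprem P) \<Longrightarrow> gKTp S (L + G) (R + D) \<and> Q S (L + G) (R + D))
      \<Longrightarrow> Q S (add_mset P G) D"
  and hR: "\<And>S P G D. rprem P \<noteq> [] \<Longrightarrow> (\<And>L R. (L,R) \<in> set (rprem P) \<Longrightarrow> gKTp S (L + G) (R + D) \<and> Q S (L + G) (R + D))
      \<Longrightarrow> Q S G (add_mset P D)"
  and hDK: "\<And>X b Gr Sm Pm Om. gKTp {#} (image_mset snd X) {#b#} \<Longrightarrow> Q {#} (image_mset snd X) {#b#} \<Longrightarrow>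
      \<forall>(H,a)\<in>#X. gset H \<subseteq> gset Gr \<Longrightarrow> \<forall>f\<in>#Sm. boxed_other Gr f \<Longrightarrow> \<forall>f\<in>#Pm. is_atom_or_bot f \<Longrightarrow>
      \<forall>f\<in>#Om. omega_ok f \<Longrightarrow> Q (Sm + image_mset bx X) Pm (add_mset (Box Gr b) Om)"
  and hDT: "\<And>H a S G D. gKTp (add_mset (Box H a) S) (add_mset a G) D \<Longrightarrow> Q (add_mset (Box H a) S) (add_mset a G) D
      \<Longrightarrow> Q S (add_mset (Box H a) G) D"
  shows "Q S G D"
  using assms(1)
proof (induction rule: gKTp.induct)
  case (ax Sm Gm p Dm) then show ?case using hax[OF ax] by (simp add: add.commute)
next
  case (axBot Sm Gm Dm) then show ?case using hbot[OF axBot] by simp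
next
  case (RConj Sm Gm Dm a1 a2)
  have "Q Sm Gm (add_mset (Conj a1 a2) Dm)" by (rule hR) (use RConj in auto)
  then show ?case by simp
next
  case (LConj Sm a1 a2 Gm Dm)
  have "Q Sm (add_mset (Conj a1 a2) Gm) Dm" by (rule hL) (use LConj in auto)
  then show ?case by simp
next
  case (RDisj Sm Gm Dm a1 a2)
  have "Q Sm Gm (add_mset (Disj a1 a2) Dm)" by (rule hR) (use RDisj in auto)
  then show ?case by simp
next
  case (LDisj Sm a1 Gm Dm a2)
  have "Q Sm (add_mset (Disj a1 a2) Gm) Dm" by (rule hL) (use LDisj in auto)
  then show ?case by simp
next
  case (RImp Sm a1 Gm Dm a2)
  have "Q Sm Gm (add_mset (Imp a1 a2) Dm)" by (rule hR) (use RImp in auto)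
  then show ?case by simp
next
  case (LImp Sm Gm Dm a1 a2)
  have "Q Sm (add_mset (Imp a1 a2) Gm) Dm" by (rule hL) (use LImp in auto)
  then show ?case by simp
next
  case (RNeg Sm a Gm Dm)
  have "Q Sm Gm (add_mset (Neg a) Dm)" by (rule hR) (use RNeg in auto)
  then show ?case by simp
next
  case (LNeg Sm Gm Dm a)
  have "Q Sm (add_mset (Neg a) Gm) Dm" by (rule hL) (use LNeg in auto)
  then show ?case by simp
next
  case (DKp xs b G Sm Pm Om) then show ?case using hDK[of "mset xs" b G Sm Pm Om] by (simp add: mset_map)
next
  case (DTp G a Sm Gm Dm) then show ?case using hDT[of G a Sm Gm Dm] by simp
qed

lemma boxed_other_boxed: "boxed_other Gr f \<Longrightarrow> is_boxed f" by (cases f) auto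

lemma S_boxed: "gKTp S G D \<Longrightarrow> \<forall>f\<in>#S. is_boxed f"
proof (induction rule: gKTp_induct)
  case (L S P G D) then obtain L R where "(L,R) \<in> set (lprem P)" by (cases "lprem P") auto
  then show ?case using L(2) by blast
next
  case (R S P G D) then obtain L R where "(L,R) \<in> set (rprem P)" by (cases "rprem P") auto
  then show ?case using R(2) by blast
next
  case (DK X b Gr Sm Pm Om)
  then show ?case using boxed_other_boxed by fastforce
qed auto


lemma lprem_ne: "(L,R) \<in> set (lprem P) \<Longrightarrow> lprem P \<noteq> []" by auto
lemma rprem_ne: "(L,R) \<in> set (rprem P) \<Longrightarrow> rprem P \<noteq> []" by auto
lemma lprem_not_atom: "(L,R) \<in> set (lprem P) \<Longrightarrow> \<not> is_atom_or_bot P" by (cases P) auto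
lemma rprem_not_omega: "(L,R) \<in> set (rprem P) \<Longrightarrow> \<not> omega_ok P" by (cases P) (auto simp: omega_ok_def)
lemma lprem_not_box: "(L,R) \<in> set (lprem P) \<Longrightarrow> P \<noteq> Box H a" by (cases P) auto
lemma lprem_not_atom2: "(L,R) \<in> set (lprem P) \<Longrightarrow> P \<noteq> Atom p \<and> P \<noteq> Bot"
  using lprem_not_atom by fastforce
lemma rprem_not_atom2: "(L,R) \<in> set (rprem P) \<Longrightarrow> P \<noteq> Atom p \<and> P \<noteq> Box H a"
  using rprem_not_omega by (fastforce simp: omega_ok_def)

lemma iL: "gKTp S G D \<Longrightarrow> P \<in># G \<Longrightarrow> (L,R) \<in> set (lprem P) \<Longrightarrow> gKTp S (L + (G - {#P#})) (R + D)"
proof (induction rule: gKTp_induct)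
  case (ax S G p D)
  then have "P \<in># G" using lprem_not_atom2 by fastforce
  then show ?case using ax by (intro ax_m[of _ p]) auto
next
  case (axBot S G D)
  then have "P \<in># G" using lprem_not_atom2 by fastforce
  then show ?case using axBot by (intro bot_m) auto
next
  case (L S P' G D)
  show ?case
  proof (cases "P' = P")
    case True then show ?thesis using L by auto
  next
    case False
    then have PG: "P \<in># G" using L by auto
    show ?thesis
    proof (rule Lrule_m[of P'])
      fix L' R' assume LR: "(L',R') \<in> set (lprem P')"
      then have "gKTp S (L + (L' + G - {#P#})) (R + (R' + D))" using L PG by auto
      moreover have "L' + G - {#P#} = L' + (G - {#P#})" using PG by (rule diff_single_plus)
      moreover have "L + (add_mset P' G - {#P#}) - {#P'#} = L + (G - {#P#})"
        using PG by (simp add: diff_single_add)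
      ultimately show "gKTp S (L' + (L + (add_mset P' G - {#P#}) - {#P'#})) (R' + (R + D))"
        by (simp add: add.left_commute)
    qed (use L PG in \<open>auto simp: diff_single_add\<close>)
  qed
next
  case (R S P' G D)
  show ?case
  proof (rule Rrule_m[of P'])
    fix L' R' assume LR: "(L',R') \<in> set (rprem P')"
    then have "gKTp S (L + (L' + G - {#P#})) (R + (R' + D))" using R by auto
    moreover have "L' + G - {#P#} = L' + (G - {#P#})" using R by (intro diff_single_plus) auto
    ultimately show "gKTp S (L' + (L + (G - {#P#}))) (R' + (R + add_mset P' D - {#P'#}))"
      by (simp add: add.left_commute)
  qed (use R in auto)
next
  case (DK X b Gr Sm Pm Om)
  then show ?case using lprem_not_atom by blast
next
  case (DT H a S G D)
  then have PG: "P \<in># G" using lprem_not_box by fastforce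
  show ?case
  proof (rule DT_m[of H a])
    have "gKTp (add_mset (Box H a) S) (L + (add_mset a G - {#P#})) (R + D)" using DT PG by auto
    then show "gKTp (add_mset (Box H a) S) (add_mset a (L + (add_mset (Box H a) G - {#P#}) - {#Box H a#})) (R + D)"
      using PG by (simp add: diff_single_add)
  qed (use PG in auto)
qed

lemma iR: "gKTp S G D \<Longrightarrow> P \<in># D \<Longrightarrow> (L,R) \<in> set (rprem P) \<Longrightarrow> gKTp S (L + G) (R + (D - {#P#}))"
proof (induction rule: gKTp_induct)
  case (ax S G p D)
  then have PD: "P \<in># D" using rprem_not_atom2 by fastforce
  show ?case by (rule ax_m[of _ p]) (use ax PD in \<open>auto simp: diff_single_add\<close>)
next
  case (axBot S G D)
  then show ?case by (intro bot_m) auto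
next
  case (L S P' G D)
  have "gKTp S (add_mset P' (L + G)) (R + (D - {#P#}))"
  proof (rule Lrule)
    fix L' R' assume LR: "(L',R') \<in> set (lprem P')"
    then have "gKTp S (L + (L' + G)) (R + (R' + D - {#P#}))" using L by auto
    moreover have "R' + D - {#P#} = R' + (D - {#P#})" using L by (intro diff_single_plus) auto
    ultimately show "gKTp S (L' + (L + G)) (R' + (R + (D - {#P#})))"
      by (simp add: add.left_commute)
  qed (use L in auto)
  then show ?case by simp
next
  case (R S P' G D)
  show ?case
  proof (cases "P' = P")
    case True then show ?thesis using R by auto
  next
    case False
    then have PD: "P \<in># D" using R by auto
    show ?thesis
    proof (rule Rrule_m[of P'])
      fix L' R' assume LR: "(L',R') \<in> set (rprem P')"
      then have "gKTp S (L + (L' + G)) (R + (R' + D - {#P#}))" using R PD by auto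
      moreover have "R' + D - {#P#} = R' + (D - {#P#})" using PD by (rule diff_single_plus)
      moreover have "R + (add_mset P' D - {#P#}) - {#P'#} = R + (D - {#P#})"
        using PD by (simp add: diff_single_add)
      ultimately show "gKTp S (L' + (L + G)) (R' + (R + (add_mset P' D - {#P#}) - {#P'#}))"
        by (simp add: add.left_commute)
    qed (use R PD in \<open>auto simp: diff_single_add\<close>)
  qed
next
  case (DK X b Gr Sm Pm Om)
  have "omega_ok (Box Gr b)" by (simp add: omega_ok_def)
  then have "omega_ok P" using DK by auto
  then show ?case using rprem_not_omega DK by blast
next
  case (DT H a S G D)
  have "gKTp (add_mset (Box H a) S) (L + add_mset a G) (R + (D - {#P#}))" using DT by auto
  then have "gKTp S (add_mset (Box H a) (L + G)) (R + (D - {#P#}))" by (intro DT_a) simp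
  then show ?case by simp
qed

lemma iDT: "gKTp S G D \<Longrightarrow> Box H a \<in># G \<Longrightarrow> gKTp (add_mset (Box H a) S) (add_mset a (G - {#Box H a#})) D"
proof (induction rule: gKTp_induct)
  case (ax S G p D)
  then have "Box H a \<in># G" by auto
  then show ?case by (intro ax_m[of _ p]) (use ax in \<open>auto simp: diff_single_add\<close>)
next
  case (axBot S G D)
  then have "Box H a \<in># G" by auto
  then show ?case by (intro bot_m) (use axBot in \<open>auto simp: diff_single_add\<close>)
next
  case (L S P' G D)
  then have BG: "Box H a \<in># G" using lprem_not_box by fastforce
  have "gKTp (add_mset (Box H a) S) (add_mset P' (add_mset a (G - {#Box H a#}))) D"
  proof (rule Lrule)
    fix L' R' assume LR: "(L',R') \<in> set (lprem P')"
    then have "gKTp (add_mset (Box H a) S) (add_mset a (L' + G - {#Box H a#})) (R' + D)" using L BG by auto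
    moreover have "L' + G - {#Box H a#} = L' + (G - {#Box H a#})" using BG by (rule diff_single_plus)
    ultimately show "gKTp (add_mset (Box H a) S) (L' + add_mset a (G - {#Box H a#})) (R' + D)"
      by simp
  qed (use L in auto)
  then show ?case using BG by (simp add: diff_single_add add_mset_commute)
next
  case (R S P' G D)
  have "gKTp (add_mset (Box H a) S) (add_mset a (G - {#Box H a#})) (add_mset P' D)"
  proof (rule Rrule)
    fix L' R' assume LR: "(L',R') \<in> set (rprem P')"
    then have "gKTp (add_mset (Box H a) S) (add_mset a (L' + G - {#Box H a#})) (R' + D)" using R by auto
    moreover have "L' + G - {#Box H a#} = L' + (G - {#Box H a#})" using R by (intro diff_single_plus) auto
    ultimately show "gKTp (add_mset (Box H a) S) (L' + add_mset a (G - {#Box H a#})) (R' + D)"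
      by simp
  qed (use R in auto)
  then show ?case by simp
next
  case (DK X b Gr Sm Pm Om)
  then show ?case by fastforce
next
  case (DT H' a' S G D)
  show ?case
  proof (cases "Box H' a' = Box H a")
    case True then show ?thesis using DT by auto
  next
    case False
    then have BG: "Box H a \<in># G" using DT by auto
    have "gKTp (add_mset (Box H a) (add_mset (Box H' a') S)) (add_mset a (add_mset a' G - {#Box H a#})) D"
      using DT BG by auto
    then have "gKTp (add_mset (Box H' a') (add_mset (Box H a) S)) (add_mset a' (add_mset a (G - {#Box H a#}))) D"
      using BG by (simp add: diff_single_add add_mset_commute)
    then have "gKTp (add_mset (Box H a) S) (add_mset (Box H' a') (add_mset a (G - {#Box H a#}))) D"
      by (rule DT_a)
    then show ?thesis using BG by (simp add: diff_single_add add_mset_commute)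
  qed
qed

definition WL :: "('a,'p) fm \<Rightarrow> bool" where
  "WL c \<longleftrightarrow> (\<forall>S G D. gKTp S G D \<longrightarrow> gKTp S (add_mset c G) D)"
definition WR :: "('a,'p) fm \<Rightarrow> bool" where
  "WR c \<longleftrightarrow> (\<forall>S G D. gKTp S G D \<longrightarrow> gKTp S G (add_mset c D))"

lemma mWL: "(\<forall>f\<in>#M. WL f) \<Longrightarrow> gKTp S G D \<Longrightarrow> gKTp S (M + G) D"
proof (induction M arbitrary: G)
  case (add x M)
  then have "gKTp S (M + G) D" by auto
  then show ?case using add(2) unfolding WL_def by simp
qed simp

lemma mWR: "(\<forall>f\<in>#M. WR f) \<Longrightarrow> gKTp S G D \<Longrightarrow> gKTp S G (M + D)"
proof (induction M arbitrary: D)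
  case (add x M)
  then have "gKTp S G (M + D)" by auto
  then show ?case using add(2) unfolding WR_def by simp
qed simp

lemma WS_step:
  fixes c :: "('a,'p) fm"
  assumes IH: "\<And>c' :: ('a,'p) fm. size c' < size c \<Longrightarrow> WL c'" and cb: "is_boxed c"
  shows "gKTp S G D \<Longrightarrow> gKTp (add_mset c S) G D"
proof (induction rule: gKTp_induct)
  case (ax S G p D)
  then show ?case using cb by (intro ax_m[of _ p]) auto
next
  case (axBot S G D)
  then show ?case using cb by (intro bot_m) auto
next
  case (L S P G D)
  then show ?case by (intro Lrule) auto
next
  case (R S P G D)
  then show ?case by (intro Rrule) auto
next
  case (DK X b Gr Sm Pm Om)
  obtain H d where c: "c = Box H d" using cb by (cases c) auto
  show ?case
  proof (cases "boxed_other Gr c")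
    case True
    have "gKTp (add_mset c Sm + image_mset bx X) Pm (add_mset (Box Gr b) Om)"
      by (rule DK_X) (use DK True in auto)
    then show ?thesis by simp
  next
    case False
    then have HG: "gset H \<subseteq> gset Gr" using c by simp
    have "WL d" using IH[of d] c by simp
    then have "gKTp {#} (image_mset snd (add_mset (H,d) X)) {#b#}" using DK(1) unfolding WL_def by simp
    then have "gKTp (Sm + image_mset bx (add_mset (H,d) X)) Pm (add_mset (Box Gr b) Om)"
      by (rule DK_X) (use DK HG in auto)
    then show ?thesis using c by simp
  qed
next
  case (DT H a S G D)
  then have "gKTp (add_mset (Box H a) (add_mset c S)) (add_mset a G) D" by (simp add: add_mset_commute)
  then show ?case by (rule DT_a)
qed

lemma WL_step:
  fixes c :: "('a,'p) fm"
  assumes IH: "\<And>c' :: ('a,'p) fm. size c' < size c \<Longrightarrow> WL c' \<and> WR c'"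
    and WS: "is_boxed c \<Longrightarrow> (\<And>S G D. gKTp S G D \<Longrightarrow> gKTp (add_mset c S) G D)"
  shows "gKTp S G D \<Longrightarrow> gKTp S (add_mset c G) D"
proof (induction rule: gKTp_induct)
  case (ax S G p D)
  then show ?case by (intro ax_m[of _ p]) auto
next
  case (axBot S G D)
  then show ?case by (intro bot_m) auto
next
  case (L S P G D)
  have "gKTp S (add_mset P (add_mset c G)) D" by (rule Lrule) (use L in auto)
  then show ?case by (simp add: add_mset_commute)
next
  case (R S P G D)
  then show ?case by (intro Rrule) auto
next
  case (DK X b Gr Sm Pm Om)
  have H0: "gKTp (Sm + image_mset bx X) Pm (add_mset (Box Gr b) Om)"
    by (rule DK_X) (use DK in auto)
  consider "is_atom_or_bot c" | "lprem c \<noteq> []" | H d where "c = Box H d" using fm_cases3 by blast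
  then show ?case
  proof cases
    case 1
    show ?thesis by (rule DK_X) (use DK 1 in auto)
  next
    case 2
    show ?thesis
    proof (rule Lrule[OF 2])
      fix L R assume LR: "(L,R) \<in> set (lprem c)"
      have "\<forall>f\<in>#L. WL f" using IH lprem_size[OF LR] by (meson union_iff)
      moreover have "\<forall>f\<in>#R. WR f" using IH lprem_size[OF LR] by (meson union_iff)
      ultimately show "gKTp (Sm + image_mset bx X) (L + Pm) (R + add_mset (Box Gr b) Om)"
        using mWL mWR H0 by blast
    qed
  next
    case 3
    have "WL d" using IH[of d] 3 by simp
    moreover have "gKTp (add_mset c (Sm + image_mset bx X)) Pm (add_mset (Box Gr b) Om)"
      using WS[OF _ H0] 3 by simp
    ultimately have "gKTp (add_mset c (Sm + image_mset bx X)) (add_mset d Pm) (add_mset (Box Gr b) Om)"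
      unfolding WL_def by blast
    then show ?thesis using 3 by (simp add: DT_a)
  qed
next
  case (DT H a S G D)
  then have "gKTp (add_mset (Box H a) S) (add_mset a (add_mset c G)) D" by (simp add: add_mset_commute)
  then have "gKTp S (add_mset (Box H a) (add_mset c G)) D" by (rule DT_a)
  then show ?case by (simp add: add_mset_commute)
qed

lemma WR_step:
  fixes c :: "('a,'p) fm"
  assumes IH: "\<And>c' :: ('a,'p) fm. size c' < size c \<Longrightarrow> WL c' \<and> WR c'"
  shows "gKTp S G D \<Longrightarrow> gKTp S G (add_mset c D)"
proof (induction rule: gKTp_induct)
  case (ax S G p D)
  then show ?case by (intro ax_m[of _ p]) auto
next
  case (axBot S G D)
  then show ?case by (intro bot_m) auto
next
  case (L S P G D)
  then show ?case by (intro Lrule) auto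
next
  case (R S P G D)
  have "gKTp S G (add_mset P (add_mset c D))" by (rule Rrule) (use R in auto)
  then show ?case by (simp add: add_mset_commute)
next
  case (DK X b Gr Sm Pm Om)
  have H0: "gKTp (Sm + image_mset bx X) Pm (add_mset (Box Gr b) Om)"
    by (rule DK_X) (use DK in auto)
  consider "omega_ok c" | "rprem c \<noteq> []" using fm_cases_r by blast
  then show ?case
  proof cases
    case 1
    have "gKTp (Sm + image_mset bx X) Pm (add_mset (Box Gr b) (add_mset c Om))"
      by (rule DK_X) (use DK 1 in auto)
    then show ?thesis by (simp add: add_mset_commute)
  next
    case 2
    show ?thesis
    proof (rule Rrule[OF 2])
      fix L R assume LR: "(L,R) \<in> set (rprem c)"
      have "\<forall>f\<in>#L. WL f" using IH rprem_size[OF LR] by (meson union_iff)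
      moreover have "\<forall>f\<in>#R. WR f" using IH rprem_size[OF LR] by (meson union_iff)
      ultimately show "gKTp (Sm + image_mset bx X) (L + Pm) (R + add_mset (Box Gr b) Om)"
        using mWL mWR H0 by blast
    qed
  qed
next
  case (DT H a S G D)
  then show ?case by (intro DT_a) auto
qed

lemma W_all: "WL c \<and> WR c \<and> (is_boxed c \<longrightarrow> (\<forall>S G D. gKTp S G D \<longrightarrow> gKTp (add_mset c S) G D))"
proof (induction c rule: measure_induct_rule[where f=size])
  case (less c)
  have WS: "is_boxed c \<Longrightarrow> gKTp S G D \<Longrightarrow> gKTp (add_mset c S) G D" for S G D
    using WS_step[of c S G D] less by blast
  have "WL c" unfolding WL_def using WL_step[of c] less WS by blast
  moreover have "WR c" unfolding WR_def using WR_step[of c] less by blast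
  ultimately show ?case using WS by blast
qed

lemma weakL: "gKTp S G D \<Longrightarrow> gKTp S (M + G) D"
  using mWL W_all by blast
lemma weakR: "gKTp S G D \<Longrightarrow> gKTp S G (M + D)"
  using mWR W_all by blast

lemma weakS: "is_boxed c \<Longrightarrow> gKTp S G D \<Longrightarrow> gKTp (add_mset c S) G D"
  using W_all by blast

definition CL :: "('a,'p) fm \<Rightarrow> bool" where
  "CL c \<longleftrightarrow> (\<forall>S G D. gKTp S G D \<longrightarrow> 2 \<le> count G c \<longrightarrow> gKTp S (G - {#c#}) D)"
definition CR :: "('a,'p) fm \<Rightarrow> bool" where
  "CR c \<longleftrightarrow> (\<forall>S G D. gKTp S G D \<longrightarrow> 2 \<le> count D c \<longrightarrow> gKTp S G (D - {#c#}))"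

lemma mCL: "(\<forall>f\<in>#M. CL f) \<Longrightarrow> gKTp S (M + M + G) D \<Longrightarrow> gKTp S (M + G) D"
proof (induction M arbitrary: G)
  case (add x M)
  have "gKTp S (add_mset x (add_mset x (M + M + G))) D" using add(3) by simp
  moreover have "CL x" using add(2) by simp
  moreover have "2 \<le> count (add_mset x (add_mset x (M + M + G))) x" by simp
  ultimately have "gKTp S (add_mset x (add_mset x (M + M + G)) - {#x#}) D" unfolding CL_def by blast
  then have "gKTp S (add_mset x (M + M + G)) D" by simp
  moreover have "(\<forall>f\<in>#M. CL f) \<Longrightarrow> gKTp S (add_mset x (M + M + G)) D \<Longrightarrow> gKTp S (add_mset x (M + G)) D"
    using add.IH[of "add_mset x G"] by simp
  ultimately show ?case using add.prems by simp
qed simp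

lemma mCR: "(\<forall>f\<in>#M. CR f) \<Longrightarrow> gKTp S G (M + M + D) \<Longrightarrow> gKTp S G (M + D)"
proof (induction M arbitrary: D)
  case (add x M)
  have "gKTp S G (add_mset x (add_mset x (M + M + D)))" using add(3) by simp
  moreover have "CR x" using add(2) by simp
  moreover have "2 \<le> count (add_mset x (add_mset x (M + M + D))) x" by simp
  ultimately have "gKTp S G (add_mset x (add_mset x (M + M + D)) - {#x#})" unfolding CR_def by blast
  then have "gKTp S G (add_mset x (M + M + D))" by simp
  moreover have "(\<forall>f\<in>#M. CR f) \<Longrightarrow> gKTp S G (add_mset x (M + M + D)) \<Longrightarrow> gKTp S G (add_mset x (M + D))"
    using add.IH[of "add_mset x D"] by simp
  ultimately show ?case using add.prems by simp
qed simp

lemma count_bx: "count (image_mset bx X) (Box H d) = count X (H,d)"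
  by (induction X) auto

lemma count_image_ge: "count X x \<le> count (image_mset f X) (f x)"
  by (induction X) auto

lemma diff_single_plus2: "y \<in># M \<Longrightarrow> M + N - {#y#} = (M - {#y#}) + N"
  by (metis add.commute diff_single_plus)

lemma CS_step:
  fixes c :: "('a,'p) fm"
  assumes IH: "\<And>c' :: ('a,'p) fm. size c' < size c \<Longrightarrow> CL c'"
  shows "gKTp S G D \<Longrightarrow> 2 \<le> count S c \<Longrightarrow> gKTp (S - {#c#}) G D"
proof (induction rule: gKTp_induct)
  case (ax S G p D)
  then show ?case by (intro ax_m[of _ p]) (auto dest: in_diffD)
next
  case (axBot S G D)
  then show ?case by (intro bot_m) (auto dest: in_diffD)
next
  case (L S P G D)
  then show ?case by (intro Lrule) auto
next
  case (R S P G D)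
  then show ?case by (intro Rrule) auto
next
  case (DK X b Gr Sm Pm Om)
  show ?case
  proof (cases "boxed_other Gr c")
    case True
    have "c \<notin># image_mset bx X"
    proof
      assume "c \<in># image_mset bx X"
      then obtain H a where "(H,a) \<in># X" "c = Box H a" by auto
      then show False using DK True by auto
    qed
    then have cS: "c \<in># Sm" using DK by (metis count_inI not_numeral_le_zero union_iff count_eq_zero_iff)
    have "gKTp ((Sm - {#c#}) + image_mset bx X) Pm (add_mset (Box Gr b) Om)"
      by (rule DK_X) (use DK in \<open>auto dest: in_diffD\<close>)
    then show ?thesis by (simp only: diff_single_plus2[OF cS])
  next
    case False
    then have "c \<notin># Sm" using DK False by auto
    then have cnt: "2 \<le> count (image_mset bx X) c" using DK by (simp add: not_in_iff)
    then have "c \<in># image_mset bx X" by (metis count_inI not_numeral_le_zero)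
    then obtain H d where Hd: "(H,d) \<in># X" "c = Box H d" by auto
    then obtain X' where X': "X = add_mset (H,d) X'" by (meson mset_add)
    have "2 \<le> count X (H,d)" using cnt Hd count_bx by metis
    then have "(H,d) \<in># X'" using X' by (simp add: count_inI)
    then have dX': "d \<in># image_mset snd X'" by force
    have "CL d" using IH[of d] Hd by simp
    moreover have "gKTp {#} (add_mset d (image_mset snd X')) {#b#}" using DK(1) X' by simp
    moreover have "2 \<le> count (add_mset d (image_mset snd X')) d" using dX'
      by (simp add: Suc_le_eq)
    ultimately have "gKTp {#} (add_mset d (image_mset snd X') - {#d#}) {#b#}" unfolding CL_def by blast
    then have "gKTp {#} (image_mset snd X') {#b#}" by simp
    then have "gKTp (Sm + image_mset bx X') Pm (add_mset (Box Gr b) Om)"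
      by (rule DK_X) (use DK X' in auto)
    then show ?thesis using X' Hd by simp
  qed
next
  case (DT H a S G D)
  then have cS: "c \<in># S" by (metis count_inI not_numeral_le_zero)
  have "2 \<le> count S c" using DT by blast
  then have "2 \<le> count (add_mset (Box H a) S) c" using cS by simp
  then have "gKTp (add_mset (Box H a) S - {#c#}) (add_mset a G) D" using DT by blast
  then have "gKTp (add_mset (Box H a) (S - {#c#})) (add_mset a G) D" using cS by (simp add: diff_single_add)
  then show ?case by (rule DT_a)
qed

lemma count2_in: "2 \<le> count M x \<Longrightarrow> x \<in># M"
  by (metis count_inI not_numeral_le_zero)

lemma count2_in_diff: "2 \<le> count M x \<Longrightarrow> x \<in># M - {#x#}"
  by (simp add: in_diff_count)

lemma CL_step:
  fixes c :: "('a,'p) fm"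
  assumes IH: "\<And>c' :: ('a,'p) fm. size c' < size c \<Longrightarrow> CL c' \<and> CR c'"
    and CS: "\<And>S G D. gKTp S G D \<Longrightarrow> 2 \<le> count S c \<Longrightarrow> gKTp (S - {#c#}) G D"
  shows "gKTp S G D \<Longrightarrow> 2 \<le> count G c \<Longrightarrow> gKTp S (G - {#c#}) D"
proof (induction rule: gKTp_induct)
  case (ax S G p D)
  have "Atom p \<in># add_mset (Atom p) G - {#c#}"
    using ax count2_in_diff[of "add_mset (Atom p) G" c] by (cases "c = Atom p") (auto simp: diff_single_add)
  then show ?case using ax by (intro ax_m[of _ p]) auto
next
  case (axBot S G D)
  have "Bot \<in># add_mset Bot G - {#c#}"
    using axBot count2_in_diff[of "add_mset Bot G" c] by (cases "c = Bot") (auto simp: diff_single_add)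
  then show ?case using axBot by (intro bot_m) auto
next
  case (L S P G D)
  show ?case
  proof (cases "P = c")
    case True
    then have cG: "c \<in># G" using L(3) by (simp add: Suc_le_eq)
    show ?thesis
    proof (rule Lrule_m[of c])
      fix L R assume LR: "(L,R) \<in> set (lprem c)"
      have "gKTp S (L + G) (R + D)" using L LR True by blast
      then have "gKTp S (L + (L + G - {#c#})) (R + (R + D))" using iL[of S "L + G" "R + D" c L R] LR cG by simp
      then have "gKTp S (L + (L + (G - {#c#}))) (R + (R + D))" by (simp only: diff_single_plus[OF cG])
      then have "gKTp S (L + L + (G - {#c#})) (R + R + D)" by (simp only: add.assoc)
      moreover have "\<forall>f\<in>#L. CL f" using IH lprem_size[OF LR] by (meson union_iff)
      moreover have "\<forall>f\<in>#R. CR f" using IH lprem_size[OF LR] by (meson union_iff)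
      ultimately have "gKTp S (L + (G - {#c#})) (R + D)" using mCL mCR by blast
      then show "gKTp S (L + (add_mset P G - {#c#} - {#c#})) (R + D)" using True by simp
    qed (use L True cG in auto)
  next
    case False
    then have c2: "2 \<le> count G c" using L(3) by simp
    then have cG: "c \<in># G" by (rule count2_in)
    have "gKTp S (add_mset P (G - {#c#})) D"
    proof (rule Lrule)
      fix L R assume LR: "(L,R) \<in> set (lprem P)"
      have "2 \<le> count (L + G) c" using c2 by simp
      then have "gKTp S (L + G - {#c#}) (R + D)" using L LR by blast
      then show "gKTp S (L + (G - {#c#})) (R + D)" by (simp only: diff_single_plus[OF cG])
    qed (use L in auto)
    then show ?thesis using cG by (simp add: diff_single_add)
  qed
next
  case (R S P G D)
  have cG: "c \<in># G" using R(3) by (rule count2_in)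
  have "gKTp S (G - {#c#}) (add_mset P D)"
  proof (rule Rrule)
    fix L R assume LR: "(L,R) \<in> set (rprem P)"
    have "2 \<le> count (L + G) c" using R(3) by simp
    then have "gKTp S (L + G - {#c#}) (R + D)" using R LR by blast
    then show "gKTp S (L + (G - {#c#})) (R + D)" by (simp only: diff_single_plus[OF cG])
  qed (use R in auto)
  then show ?case by simp
next
  case (DK X b Gr Sm Pm Om)
  show ?case by (rule DK_X) (use DK in \<open>auto dest: in_diffD\<close>)
next
  case (DT H a S G D)
  show ?case
  proof (cases "Box H a = c")
    case True
    then have cG: "c \<in># G" using DT by (simp add: Suc_le_eq)
    have "gKTp (add_mset c S) (add_mset a G) D" using DT True by simp
    then have "gKTp (add_mset c (add_mset c S)) (add_mset a (add_mset a G - {#c#})) D"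
      using iDT[of "add_mset c S" "add_mset a G" D H a] True cG by simp
    then have "gKTp (add_mset c (add_mset c S)) (add_mset a (add_mset a (G - {#c#}))) D"
      using cG by (simp add: diff_single_add)
    moreover have "CL a" using IH[of a] True by auto
    moreover have "2 \<le> count (add_mset a (add_mset a (G - {#c#}))) a" by simp
    ultimately have "gKTp (add_mset c (add_mset c S)) (add_mset a (add_mset a (G - {#c#})) - {#a#}) D"
      unfolding CL_def by blast
    then have "gKTp (add_mset c (add_mset c S)) (add_mset a (G - {#c#})) D" by simp
    moreover have "2 \<le> count (add_mset c (add_mset c S)) c" by simp
    ultimately have "gKTp (add_mset c (add_mset c S) - {#c#}) (add_mset a (G - {#c#})) D" using CS by blast
    then have "gKTp (add_mset (Box H a) S) (add_mset a (G - {#Box H a#})) D" using True by simp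
    moreover have "Box H a \<in># G" using cG True by simp
    ultimately have "gKTp S G D" using DT_m by blast
    then show ?thesis using True by simp
  next
    case False
    then have c2: "2 \<le> count G c" using DT by simp
    then have cG: "c \<in># G" by (rule count2_in)
    have "2 \<le> count (add_mset a G) c" using c2 cG by simp
    then have "gKTp (add_mset (Box H a) S) (add_mset a G - {#c#}) D" using DT by blast
    then have "gKTp (add_mset (Box H a) S) (add_mset a (G - {#c#})) D" using cG by (simp add: diff_single_add)
    then have "gKTp S (add_mset (Box H a) (G - {#c#})) D" by (rule DT_a)
    then show ?thesis using cG by (simp add: diff_single_add)
  qed
qed

lemma CR_step:
  fixes c :: "('a,'p) fm"
  assumes IH: "\<And>c' :: ('a,'p) fm. size c' < size c \<Longrightarrow> CL c' \<and> CR c'"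
  shows "gKTp S G D \<Longrightarrow> 2 \<le> count D c \<Longrightarrow> gKTp S G (D - {#c#})"
proof (induction rule: gKTp_induct)
  case (ax S G p D)
  have "Atom p \<in># add_mset (Atom p) D - {#c#}"
    using ax count2_in_diff[of "add_mset (Atom p) D" c] by (cases "c = Atom p") (auto simp: diff_single_add)
  then show ?case using ax by (intro ax_m[of _ p]) auto
next
  case (axBot S G D)
  then show ?case by (intro bot_m) auto
next
  case (L S P G D)
  have cD: "c \<in># D" using L(3) by (rule count2_in)
  have "gKTp S (add_mset P G) (D - {#c#})"
  proof (rule Lrule)
    fix L R assume LR: "(L,R) \<in> set (lprem P)"
    have "2 \<le> count (R + D) c" using L(3) by simp
    then have "gKTp S (L + G) (R + D - {#c#})" using L LR by blast
    then show "gKTp S (L + G) (R + (D - {#c#}))" by (simp only: diff_single_plus[OF cD])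
  qed (use L in auto)
  then show ?case by simp
next
  case (R S P G D)
  show ?case
  proof (cases "P = c")
    case True
    then have cD: "c \<in># D" using R(3) by (simp add: Suc_le_eq)
    show ?thesis
    proof (rule Rrule_m[of c])
      fix L R assume LR: "(L,R) \<in> set (rprem c)"
      have "gKTp S (L + G) (R + D)" using R LR True by blast
      then have "gKTp S (L + (L + G)) (R + (R + D - {#c#}))" using iR[of S "L + G" "R + D" c L R] LR cD by simp
      then have "gKTp S (L + (L + G)) (R + (R + (D - {#c#})))" by (simp only: diff_single_plus[OF cD])
      then have "gKTp S (L + L + G) (R + R + (D - {#c#}))" by (simp only: add.assoc)
      moreover have "\<forall>f\<in>#L. CL f" using IH rprem_size[OF LR] by (meson union_iff)
      moreover have "\<forall>f\<in>#R. CR f" using IH rprem_size[OF LR] by (meson union_iff)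
      ultimately have "gKTp S (L + G) (R + (D - {#c#}))" using mCL mCR by blast
      then show "gKTp S (L + G) (R + (add_mset P D - {#c#} - {#c#}))" using True by simp
    qed (use R True cD in auto)
  next
    case False
    then have c2: "2 \<le> count D c" using R(3) by simp
    then have cD: "c \<in># D" by (rule count2_in)
    have "gKTp S G (add_mset P (D - {#c#}))"
    proof (rule Rrule)
      fix L R assume LR: "(L,R) \<in> set (rprem P)"
      have "2 \<le> count (R + D) c" using c2 by simp
      then have "gKTp S (L + G) (R + D - {#c#})" using R LR by blast
      then show "gKTp S (L + G) (R + (D - {#c#}))" by (simp only: diff_single_plus[OF cD])
    qed (use R in auto)
    then show ?thesis using cD by (simp add: diff_single_add)
  qed
next
  case (DK X b Gr Sm Pm Om)
  have "Box Gr b \<in># add_mset (Box Gr b) Om - {#c#}"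
    using DK count2_in_diff[of "add_mset (Box Gr b) Om" c] by (cases "c = Box Gr b") (auto simp: diff_single_add)
  moreover have "\<forall>f\<in>#add_mset (Box Gr b) Om. omega_ok f"
    using DK by (simp add: omega_ok_def)
  then have "\<forall>f\<in>#add_mset (Box Gr b) Om - {#c#}. omega_ok f" by (meson in_diffD)
  ultimately show ?case using DK_m[of X b Gr Sm Pm] DK by blast
next
  case (DT H a S G D)
  then show ?case by (intro DT_a) auto
qed

lemma C_all: "CL c \<and> CR c"
proof (induction c rule: measure_induct_rule[where f=size])
  case (less c)
  have CS: "gKTp S G D \<Longrightarrow> 2 \<le> count S c \<Longrightarrow> gKTp (S - {#c#}) G D" for S G D
    using CS_step[of c S G D] less by blast
  have "CL c" unfolding CL_def using CL_step[of c] less CS by blast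
  moreover have "CR c" unfolding CR_def using CR_step[of c] less by blast
  ultimately show ?case by blast
qed

lemma contrL: "gKTp S (add_mset c (add_mset c G)) D \<Longrightarrow> gKTp S (add_mset c G) D"
proof -
  assume a: "gKTp S (add_mset c (add_mset c G)) D"
  have "2 \<le> count (add_mset c (add_mset c G)) c" by simp
  then have "gKTp S (add_mset c (add_mset c G) - {#c#}) D" using a C_all unfolding CL_def by blast
  then show ?thesis by simp
qed

primrec cont :: "('a,'p) fm \<Rightarrow> ('a,'p) fm" where
  "cont (Box H a) = a"
| "cont (Atom p) = Atom p"
| "cont Bot = Bot"
| "cont (Conj a b) = Conj a b"
| "cont (Disj a b) = Disj a b"
| "cont (Imp a b) = Imp a b"
| "cont (Neg a) = Neg a"

lemma mDT: "(\<forall>f\<in>#B. is_boxed f) \<Longrightarrow> gKTp (S0 + B) (G + image_mset cont B) D \<Longrightarrow> gKTp S0 (G + B) D"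
proof (induction B arbitrary: S0 G)
  case (add x B)
  obtain H a where x: "x = Box H a" using add(2) by (cases x) auto
  have "gKTp (add_mset x S0 + B) (add_mset a G + image_mset cont B) D" using add(3) x by simp
  moreover have "\<forall>f\<in>#B. is_boxed f" using add(2) by simp
  ultimately have "gKTp (add_mset x S0) (add_mset a G + B) D" using add.IH[of "add_mset x S0" "add_mset a G"] by blast
  then have "gKTp S0 (add_mset x (G + B)) D" using x by (simp add: DT_a)
  then show ?case by simp
qed simp

lemma dir1: "gKT G D \<Longrightarrow> gKTp {#} G D"
proof (induction rule: gKT.induct)
  case (ax Gm p Dm)
  then show ?case by (intro ax_m[of _ p]) auto
next
  case (axBot Gm Dm)
  then show ?case by (intro bot_m) auto
next
  case (RConj Gm Dm a1 a2)
  have "gKTp {#} Gm (add_mset (Conj a1 a2) Dm)" by (rule Rrule) (use RConj in auto)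
  then show ?case by simp
next
  case (LConj a1 a2 Gm Dm)
  have "gKTp {#} (add_mset (Conj a1 a2) Gm) Dm" by (rule Lrule) (use LConj in auto)
  then show ?case by simp
next
  case (RDisj Gm Dm a1 a2)
  have "gKTp {#} Gm (add_mset (Disj a1 a2) Dm)" by (rule Rrule) (use RDisj in auto)
  then show ?case by simp
next
  case (LDisj a1 Gm Dm a2)
  have "gKTp {#} (add_mset (Disj a1 a2) Gm) Dm" by (rule Lrule) (use LDisj in auto)
  then show ?case by simp
next
  case (RImp a1 Gm Dm a2)
  have "gKTp {#} Gm (add_mset (Imp a1 a2) Dm)" by (rule Rrule) (use RImp in auto)
  then show ?case by simp
next
  case (LImp Gm Dm a1 a2)
  have "gKTp {#} (add_mset (Imp a1 a2) Gm) Dm" by (rule Lrule) (use LImp in auto)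
  then show ?case by simp
next
  case (RNeg a Gm Dm)
  have "gKTp {#} Gm (add_mset (Neg a) Dm)" by (rule Rrule) (use RNeg in auto)
  then show ?case by simp
next
  case (LNeg Gm Dm a)
  have "gKTp {#} (add_mset (Neg a) Gm) Dm" by (rule Lrule) (use LNeg in auto)
  then show ?case by simp
next
  case (DK xs b G Sm Om)
  define X where "X = mset xs"
  define Sb where "Sb = filter_mset is_boxed Sm"
  define Pa where "Pa = filter_mset (\<lambda>f. \<not> is_boxed f) Sm"
  have Sm: "Sm = Sb + Pa" unfolding Sb_def Pa_def by (rule multiset_partition)
  have sb: "\<forall>f\<in>#Sb. boxed_other G f"
  proof
    fix f assume "f \<in># Sb"
    then have "sigma_ok G f" "is_boxed f" using DK unfolding Sb_def by auto
    then show "boxed_other G f" by (cases f) auto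
  qed
  have pa: "\<forall>f\<in>#Pa. is_atom_or_bot f"
  proof
    fix f assume "f \<in># Pa"
    then have "sigma_ok G f" "\<not> is_boxed f" using DK unfolding Pa_def by auto
    then show "is_atom_or_bot f" by (cases f) auto
  qed
  have H0: "gKTp (Sb + image_mset bx X) Pa (add_mset (Box G b) Om)"
    by (rule DK_X) (use DK sb pa in \<open>auto simp: X_def mset_map\<close>)
  define B where "B = Sb + image_mset bx X"
  have Bb: "\<forall>f\<in>#B. is_boxed f" unfolding B_def using sb boxed_other_boxed by auto
  have "gKTp ({#} + B) (Pa + image_mset cont B) (add_mset (Box G b) Om)"
    using weakL[OF H0, of "image_mset cont B"] unfolding B_def by (simp add: add.commute)
  then have "gKTp {#} (Pa + B) (add_mset (Box G b) Om)" using mDT[OF Bb] by blast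
  moreover have "Pa + B = Sm + mset (map bx xs)" unfolding B_def Sm X_def
    by (simp add: mset_map)
  ultimately show ?case by simp
next
  case (DT G a Gm Dm)
  have "gKTp {#} (add_mset (Box G a) (add_mset a Gm)) Dm" using DT by simp
  then have "gKTp {#Box G a#} (add_mset a (add_mset (Box G a) (add_mset a Gm) - {#Box G a#})) Dm"
    using iDT[of "{#}" "add_mset (Box G a) (add_mset a Gm)" Dm G a] by simp
  then have "gKTp {#Box G a#} (add_mset a (add_mset a Gm)) Dm" by simp
  then have "gKTp {#Box G a#} (add_mset a Gm) Dm" by (rule contrL)
  then have "gKTp {#} (add_mset (Box G a) Gm) Dm" using DT_a[of G a "{#}" Gm Dm] by simp
  then show ?case by simp
qed

lemma dir2: "gKTp S G D \<Longrightarrow> gKT (S + G) D"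
proof (induction rule: gKTp.induct)
  case (ax Sm Gm p Dm)
  then show ?case using gKT.ax[of "Sm + Gm" p Dm] by simp
next
  case (axBot Sm Gm Dm)
  then show ?case using gKT.axBot[of "Sm + Gm" Dm] by simp
next
  case (RConj Sm Gm Dm a1 a2)
  then show ?case using gKT.RConj[of "Sm + Gm" Dm a1 a2] by simp
next
  case (LConj Sm a1 a2 Gm Dm)
  then show ?case using gKT.LConj[of a1 a2 "Sm + Gm" Dm] by simp
next
  case (RDisj Sm Gm Dm a1 a2)
  then show ?case using gKT.RDisj[of "Sm + Gm" Dm a1 a2] by simp
next
  case (LDisj Sm a1 Gm Dm a2)
  then show ?case using gKT.LDisj[of a1 "Sm + Gm" Dm a2] by simp
next
  case (RImp Sm a1 Gm Dm a2)
  then show ?case using gKT.RImp[of a1 "Sm + Gm" Dm a2] by simp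
next
  case (LImp Sm Gm Dm a1 a2)
  then show ?case using gKT.LImp[of "Sm + Gm" Dm a1 a2] by simp
next
  case (RNeg Sm a Gm Dm)
  then show ?case using gKT.RNeg[of a "Sm + Gm" Dm] by simp
next
  case (LNeg Sm Gm Dm a)
  then show ?case using gKT.LNeg[of "Sm + Gm" Dm a] by simp
next
  case (DKp xs b G Sm Pm Om)
  have "\<forall>f\<in>#Sm + Pm. sigma_ok G f"
  proof
    fix f assume "f \<in># Sm + Pm"
    then show "sigma_ok G f" using DKp by (cases f) auto
  qed
  moreover have "gKT (mset (map snd xs)) {#b#}" using DKp by simp
  ultimately have "gKT (Sm + Pm + mset (map (\<lambda>(H, a). Box H a) xs)) ({#Box G b#} + Om)"
    using gKT.DK[of xs b G "Sm + Pm" Om] DKp by blast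
  then show ?case by (simp add: add.commute add.assoc)
next
  case (DTp G a Sm Gm Dm)
  then show ?case using gKT.DT[of G a "Sm + Gm" Dm] by (simp add: add_mset_commute)
qed

theorem lemma6p14:
  fixes Gm Dm :: "('a::finite, 'p::countable) fm multiset"
  shows "gKT Gm Dm \<longleftrightarrow> gKTp {#} Gm Dm"
  using dir1[of Gm Dm] dir2[of "{#}" Gm Dm] by auto

end
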